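(* Let $U$ be a Banach space with normalized unconditional basis $(e_j)$ whose normalized coordinate functionals $(e_j^* )$ form an unconditional weak$^*$ Schauder basis of $U^*$. If $\ell^1$ does not embed isomorphically into $U^*$, then $U^*$ together with $(e_j^* )$ satisfies condition (C).
   Context: Weak$^*$ Schauder basis: $x^*=\text{weak}^*\text{-}\lim_n\sum_{j=1}^n\langle x^*,e_j\rangle e_j^*$ for all $x^*\in U^*$. Unconditional: there is $C\ge1$ with $\|\sum_j\gamma_ja_je_j^*\|\le C\sup_j|\gamma_j|\,\|\sum_ja_je_j^*\|$ for bounded $(\gamma_j)$. For $\mathcal{A}\subset\mathbb{N}$, $P_{\mathcal{A}}(\sum_ja_je_j^* )=\sum_{j\in\mathcal{A}}a_je_j^*$. Condition (C): for every infinite $\Lambda\subset\mathbb{N}$ and every $\theta>0$ there is a sequence $(\mathcal{A}_j)$ of pairwise disjoint infinite subsets of $\Lambda$ such that for every $(x_j^* )\subset U^*$ with $\|x_j^*\|\le1$ there are scalars $(a_j)\in\ell^1$ with $\|(a_j)\|_{\ell^1}=1$ and $\|\sum_{j=1}^\infty a_jP_{\mathcal{A}_j}x_j^*\|_{U^*}\le\theta$ (weak$^*$ convergent series). *)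

theory Defs
  imports "HOL-Analysis.Analysis"
begin

text \<open>Real Banach space U = type 'a::banach; its dual U* = ('a \<Rightarrow>L real)
  (bounded linear functionals with the operator norm).
  Weak* convergence in U* = pointwise convergence on every x in U.\<close>

definition schauder_basis :: "(nat \<Rightarrow> 'a::real_normed_vector) \<Rightarrow> bool" where
  "schauder_basis e \<longleftrightarrow> (\<forall>x. \<exists>!a. (\<lambda>n. \<Sum>j<n. a j *\<^sub>R e j) \<longlonglongrightarrow> x)"

definition unconditional_basis :: "(nat \<Rightarrow> 'a::real_normed_vector) \<Rightarrow> bool" where
  "unconditional_basis e \<longleftrightarrow> schauder_basis e \<and>
     (\<forall>x a. (\<lambda>n. \<Sum>j<n. a j *\<^sub>R e j) \<longlonglongrightarrow> x \<longrightarrow> ((\<lambda>j. a j *\<^sub>R e j) has_sum x) UNIV)"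

definition coordinate_functionals ::
  "(nat \<Rightarrow> 'a::real_normed_vector) \<Rightarrow> (nat \<Rightarrow> ('a \<Rightarrow>\<^sub>L real)) \<Rightarrow> bool" where
  "coordinate_functionals e es \<longleftrightarrow>
     (\<forall>x. (\<lambda>n. \<Sum>j<n. blinfun_apply (es j) x *\<^sub>R e j) \<longlonglongrightarrow> x)"

definition weak_star_schauder_basis ::
  "(nat \<Rightarrow> 'a::real_normed_vector) \<Rightarrow> (nat \<Rightarrow> ('a \<Rightarrow>\<^sub>L real)) \<Rightarrow> bool" where
  "weak_star_schauder_basis e es \<longleftrightarrow>
     (\<forall>xs::'a \<Rightarrow>\<^sub>L real. \<forall>x.
        (\<lambda>n. \<Sum>j<n. blinfun_apply xs (e j) * blinfun_apply (es j) x) \<longlonglongrightarrow> blinfun_apply xs x)"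

definition unconditional_seq :: "(nat \<Rightarrow> 'b::real_normed_vector) \<Rightarrow> bool" where
  "unconditional_seq es \<longleftrightarrow> (\<exists>C\<ge>1. \<forall>n a \<gamma> M. (\<forall>j. \<bar>\<gamma> j\<bar> \<le> M) \<longrightarrow>
      norm (\<Sum>j<n. (\<gamma> j * a j) *\<^sub>R es j) \<le> C * M * norm (\<Sum>j<n. a j *\<^sub>R es j))"

definition proj ::
  "(nat \<Rightarrow> 'a::real_normed_vector) \<Rightarrow> (nat \<Rightarrow> ('a \<Rightarrow>\<^sub>L real)) \<Rightarrow> nat set \<Rightarrow>
     ('a \<Rightarrow>\<^sub>L real) \<Rightarrow> ('a \<Rightarrow>\<^sub>L real)" where
  "proj e es A xs = (THE y. \<forall>x.
     (\<lambda>n. \<Sum>j\<in>A \<inter> {..<n}. blinfun_apply xs (e j) * blinfun_apply (es j) x)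
        \<longlonglongrightarrow> blinfun_apply y x)"

definition condition_C ::
  "(nat \<Rightarrow> 'a::real_normed_vector) \<Rightarrow> (nat \<Rightarrow> ('a \<Rightarrow>\<^sub>L real)) \<Rightarrow> bool" where
  "condition_C e es \<longleftrightarrow>
    (\<forall>\<Lambda>::nat set. \<forall>\<theta>::real. infinite \<Lambda> \<and> \<theta> > 0 \<longrightarrow>
      (\<exists>A :: nat \<Rightarrow> nat set.
         (\<forall>j. A j \<subseteq> \<Lambda> \<and> infinite (A j)) \<and>
         (\<forall>i j. i \<noteq> j \<longrightarrow> A i \<inter> A j = {}) \<and>
         (\<forall>xs :: nat \<Rightarrow> ('a \<Rightarrow>\<^sub>L real). (\<forall>j. norm (xs j) \<le> 1) \<longrightarrow>
            (\<exists>(a :: nat \<Rightarrow> real) (y :: 'a \<Rightarrow>\<^sub>L real).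
               summable (\<lambda>j. \<bar>a j\<bar>) \<and> (\<Sum>j. \<bar>a j\<bar>) = 1 \<and>
               (\<forall>x. (\<lambda>n. \<Sum>j<n. a j * blinfun_apply (proj e es (A j) (xs j)) x)
                      \<longlonglongrightarrow> blinfun_apply y x) \<and>
               norm y \<le> \<theta>))))"

definition l1_embeds :: "'b::real_normed_vector itself \<Rightarrow> bool" where
  "l1_embeds _ \<longleftrightarrow> (\<exists>(T :: (nat \<Rightarrow> real) \<Rightarrow> 'b) c C.
     c > 0 \<and>
     (\<forall>a b. summable (\<lambda>j. \<bar>a j\<bar>) \<longrightarrow> summable (\<lambda>j. \<bar>b j\<bar>) \<longrightarrow>
        T (\<lambda>j. a j + b j) = T a + T b) \<and>
     (\<forall>a r. summable (\<lambda>j. \<bar>a j\<bar>) \<longrightarrow> T (\<lambda>j. r * a j) = r *\<^sub>R T a) \<and>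
     (\<forall>a. summable (\<lambda>j. \<bar>a j\<bar>) \<longrightarrow>
        c * (\<Sum>j. \<bar>a j\<bar>) \<le> norm (T a) \<and> norm (T a) \<le> C * (\<Sum>j. \<bar>a j\<bar>)))"

end

theory Submission
  imports Defs
begin

lemma unif_bound:
  fixes Q :: "nat \<Rightarrow> 'a::banach \<Rightarrow> 'b::real_normed_vector"
  assumes bl: "\<And>n. bounded_linear (Q n)"
    and pb: "\<And>x. \<exists>B. \<forall>n. norm (Q n x) \<le> B"
  shows "\<exists>B>0. \<forall>n x. norm (Q n x) \<le> B * norm x"
proof -
  define F where "F k = {x. \<forall>n. norm (Q n x) \<le> real k}" for k :: nat
  have clF: "closed (F k)" for k
  proof -
    have "F k = (\<Inter>n. {x. norm (Q n x) \<le> real k})" unfolding F_def by auto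
    moreover have "closed {x. norm (Q n x) \<le> real k}" for n
      using bl[of n] by (intro closed_Collect_le continuous_intros linear_continuous_on)
    ultimately show ?thesis by auto
  qed
  have UF: "(\<Union>k. F k) = UNIV"
  proof safe
    fix x
    obtain B where "\<forall>n. norm (Q n x) \<le> B" using pb by blast
    moreover obtain k :: nat where "B \<le> real k" using real_arch_simple by blast
    ultimately show "x \<in> (\<Union>k. F k)" unfolding F_def by (auto intro: order_trans)
  qed auto
  have "\<exists>k. interior (F k) \<noteq> {}"
  proof (rule ccontr)
    assume "\<not> ?thesis"
    then have "euclidean interior_of \<Union>(range F) = {}"
      by (intro Baire_category_alt) (auto simp: completely_metrizable_space_euclidean clF)
    then show False using UF by simp
  qed
  then obtain k x0 where "x0 \<in> interior (F k)" by blast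
  then obtain r where r: "r > 0" "ball x0 r \<subseteq> F k"
    by (meson open_contains_ball open_interior interior_subset order_trans)
  have x0F: "x0 \<in> F k" using r by auto
  define B where "B = 4 * real k / r + 1"
  have Bpos: "B > 0" unfolding B_def using r by (smt (verit) divide_nonneg_pos of_nat_0_le_iff)
  have "norm (Q n y) \<le> B * norm y" for n y
  proof (cases "y = 0")
    case True then show ?thesis using bl linear_simps(3)[OF bl] by simp
  next
    case False
    define c where "c = r / (2 * norm y)"
    have c: "c > 0" unfolding c_def using r False by simp
    define u where "u = c *\<^sub>R y"
    have "norm u < r" unfolding u_def c_def using r False by simp
    then have "x0 + u \<in> F k" using r by (auto simp: dist_norm)
    then have h1: "norm (Q n (x0 + u)) \<le> real k" unfolding F_def by auto
    have h2: "norm (Q n x0) \<le> real k" using x0F unfolding F_def by auto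
    have "Q n u = Q n (x0 + u) - Q n x0" using linear_simps[OF bl] by simp
    then have "norm (Q n u) \<le> 2 * real k" using h1 h2 norm_triangle_ineq4[of "Q n (x0+u)" "Q n x0"] by simp
    moreover have "Q n u = c *\<^sub>R Q n y" unfolding u_def using linear_simps[OF bl] by simp
    ultimately have "c * norm (Q n y) \<le> 2 * real k" using c by simp
    then have "norm (Q n y) \<le> 2 * real k / c" using c by (simp add: field_simps)
    also have "\<dots> = 4 * real k / r * norm y" unfolding c_def using r False by (simp add: field_simps)
    also have "\<dots> \<le> B * norm y" unfolding B_def by (simp add: distrib_right)
    finally show ?thesis .
  qed
  then show ?thesis using Bpos by blast
qed

lemma Q_bound:
  fixes e :: "nat \<Rightarrow> 'a::banach" and es :: "nat \<Rightarrow> ('a \<Rightarrow>\<^sub>L real)"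
  assumes "coordinate_functionals e es"
  shows "\<exists>B>0. \<forall>n x. norm (\<Sum>j<n. blinfun_apply (es j) x *\<^sub>R e j) \<le> B * norm x"
proof (rule unif_bound)
  fix n show "bounded_linear (\<lambda>x. \<Sum>j<n. blinfun_apply (es j) x *\<^sub>R e j)"
    by (intro bounded_linear_sum bounded_linear_scaleR_const blinfun.bounded_linear_right)
next
  fix x
  have "(\<lambda>n. \<Sum>j<n. blinfun_apply (es j) x *\<^sub>R e j) \<longlonglongrightarrow> x"
    using assms unfolding coordinate_functionals_def by blast
  then have "Bseq (\<lambda>n. \<Sum>j<n. blinfun_apply (es j) x *\<^sub>R e j)" by (rule convergent_imp_Bseq[OF convergentI])
  then show "\<exists>B. \<forall>n. norm (\<Sum>j<n. blinfun_apply (es j) x *\<^sub>R e j) \<le> B"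
    unfolding Bseq_def by blast
qed

lemma proj_bound:
  fixes e :: "nat \<Rightarrow> 'a::banach" and es :: "nat \<Rightarrow> ('a \<Rightarrow>\<^sub>L real)"
  assumes ub: "unconditional_basis e" and cf: "coordinate_functionals e es"
    and us: "unconditional_seq es"
  shows "\<exists>K>0. \<forall>A xs. norm (proj e es A xs) \<le> K * norm xs"
proof -
  obtain B where B: "B > 0" "\<And>n x. norm (\<Sum>j<n. blinfun_apply (es j) x *\<^sub>R e j) \<le> B * norm x"
    using Q_bound[OF cf] by blast
  obtain C where C: "C \<ge> 1" "\<And>n a \<gamma> M. (\<forall>j. \<bar>\<gamma> j\<bar> \<le> M) \<Longrightarrow>
      norm (\<Sum>j<n. (\<gamma> j * a j) *\<^sub>R es j) \<le> C * M * norm (\<Sum>j<n. a j *\<^sub>R es j)"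
    using us unfolding unconditional_seq_def by blast
  have "norm (proj e es A xs) \<le> (C * B) * norm xs" for A xs
  proof -
    define S where "S n x = (\<Sum>j\<in>A \<inter> {..<n}. blinfun_apply xs (e j) * blinfun_apply (es j) x)" for n x
    define K where "K = C * B * norm xs"
    have K0: "K \<ge> 0" unfolding K_def using B C by simp
    have Salt: "S n x = (\<Sum>j<n. ((if j \<in> A then 1 else 0) * blinfun_apply xs (e j)) * blinfun_apply (es j) x)" for n x
      unfolding S_def by (subst Int_commute, subst sum.inter_restrict, simp, rule sum.cong, auto)
    have Sbound: "\<bar>S n x\<bar> \<le> K * norm x" for n x
    proof -
      define Sb where "Sb = (\<Sum>j<n. blinfun_apply xs (e j) *\<^sub>R es j)"
      have Sbx: "blinfun_apply Sb y = blinfun_apply xs (\<Sum>j<n. blinfun_apply (es j) y *\<^sub>R e j)" for y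
        unfolding Sb_def by (simp add: blinfun.sum_left blinfun.sum_right blinfun.scaleR_right blinfun.scaleR_left mult.commute)
      have "norm Sb \<le> B * norm xs"
      proof (rule norm_blinfun_bound)
        show "0 \<le> B * norm xs" using B by simp
        fix y
        have "norm (blinfun_apply Sb y) \<le> norm xs * norm (\<Sum>j<n. blinfun_apply (es j) y *\<^sub>R e j)"
          unfolding Sbx by (rule norm_blinfun)
        also have "\<dots> \<le> norm xs * (B * norm y)" using B(2) by (simp add: mult_left_mono)
        finally show "norm (blinfun_apply Sb y) \<le> B * norm xs * norm y" by (simp add: ac_simps)
      qed
      define T where "T = (\<Sum>j<n. ((if j \<in> A then 1 else 0) * blinfun_apply xs (e j)) *\<^sub>R es j)"
      have "norm T \<le> C * 1 * norm Sb" unfolding T_def Sb_def by (rule C(2)) simp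
      also have "\<dots> \<le> K" unfolding K_def using \<open>norm Sb \<le> B * norm xs\<close> C by simp
      finally have "norm T \<le> K" .
      have "S n x = blinfun_apply T x" unfolding Salt T_def by (simp add: blinfun.sum_left blinfun.scaleR_left del: mult_1 mult_zero_left)
      then have "\<bar>S n x\<bar> \<le> norm T * norm x" using norm_blinfun[of T x] by simp
      also have "\<dots> \<le> K * norm x" using \<open>norm T \<le> K\<close> by (simp add: mult_right_mono)
      finally show ?thesis .
    qed
    have Sconv: "\<exists>l. (\<lambda>n. S n x) \<longlonglongrightarrow> l" for x
    proof -
      define f where "f j = blinfun_apply (es j) x *\<^sub>R e j" for j
      have "(\<lambda>n. \<Sum>j<n. f j) \<longlonglongrightarrow> x"
        using cf unfolding coordinate_functionals_def f_def by blast
      then have "(f has_sum x) UNIV" using ub unfolding unconditional_basis_def f_def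
        by (elim conjE allE[of _ x] allE[of _ "\<lambda>j. blinfun_apply (es j) x"]) blast
      then have "f summable_on A" using summable_on_subset_banach by (metis summable_on_def top_greatest)
      then obtain R where "(f has_sum R) A" unfolding summable_on_def by blast
      then have "((\<lambda>j. if j \<in> A then f j else 0) has_sum R) UNIV"
        by (subst has_sum_cong_neutral[where T=A]) auto
      then have "(\<lambda>j. if j \<in> A then f j else 0) sums R" by (rule has_sum_imp_sums)
      then have "(\<lambda>n. \<Sum>j<n. if j \<in> A then f j else 0) \<longlonglongrightarrow> R" unfolding sums_def .
      then have "(\<lambda>n. blinfun_apply xs (\<Sum>j<n. if j \<in> A then f j else 0)) \<longlonglongrightarrow> blinfun_apply xs R"
        by (rule blinfun.tendsto[OF tendsto_const])
      moreover have "blinfun_apply xs (\<Sum>j<n. if j \<in> A then f j else 0) = S n x" for n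
        unfolding Salt f_def by (auto simp: blinfun.sum_right blinfun.scaleR_right intro!: sum.cong)
      ultimately show ?thesis by auto
    qed
    define L where "L x = lim (\<lambda>n. S n x)" for x
    have LL: "(\<lambda>n. S n x) \<longlonglongrightarrow> L x" for x
      unfolding L_def using Sconv by (metis limI)
    have Sadd: "S n (x + z) = S n x + S n z" for n x z
      unfolding S_def by (simp add: blinfun.add_right distrib_left sum.distrib)
    have Ssc: "S n (r *\<^sub>R x) = r * S n x" for n r x
      unfolding S_def by (simp add: blinfun.scaleR_right sum_distrib_left ac_simps)
    have Ladd: "L (x + z) = L x + L z" for x z
    proof -
      have "(\<lambda>n. S n (x + z)) \<longlonglongrightarrow> L x + L z" unfolding Sadd by (intro tendsto_add LL)
      then show ?thesis using LL LIMSEQ_unique by blast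
    qed
    have Lsc: "L (r *\<^sub>R x) = r *\<^sub>R L x" for r x
    proof -
      have "(\<lambda>n. S n (r *\<^sub>R x)) \<longlonglongrightarrow> r * L x" unfolding Ssc by (intro tendsto_mult tendsto_const LL)
      then show ?thesis using LL LIMSEQ_unique by simp blast
    qed
    have Lb: "norm (L x) \<le> K * norm x" for x
    proof -
      have "(\<lambda>n. \<bar>S n x\<bar>) \<longlonglongrightarrow> \<bar>L x\<bar>" by (intro tendsto_rabs LL)
      then have "\<bar>L x\<bar> \<le> K * norm x" using Sbound by (intro LIMSEQ_le_const2) auto
      then show ?thesis by simp
    qed
    have blL: "bounded_linear L"
      by (rule bounded_linear_intro[of L K]) (use Ladd Lsc Lb in \<open>auto simp: ac_simps\<close>)
    define y where "y = Blinfun L"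
    have yL: "blinfun_apply y = L" unfolding y_def using blL by (simp add: bounded_linear_Blinfun_apply)
    have "proj e es A xs = y"
      unfolding proj_def
    proof (rule the_equality)
      show "\<forall>x. (\<lambda>n. \<Sum>j\<in>A \<inter> {..<n}. blinfun_apply xs (e j) * blinfun_apply (es j) x) \<longlonglongrightarrow> blinfun_apply y x"
        using LL unfolding yL S_def by blast
    next
      fix y' assume "\<forall>x. (\<lambda>n. \<Sum>j\<in>A \<inter> {..<n}. blinfun_apply xs (e j) * blinfun_apply (es j) x) \<longlonglongrightarrow> blinfun_apply y' x"
      then have "(\<lambda>n. S n x) \<longlonglongrightarrow> blinfun_apply y' x" for x unfolding S_def by blast
      then have "blinfun_apply y' x = L x" for x using LL LIMSEQ_unique by metis
      then show "y' = y" by (intro blinfun_eqI) (simp add: yL)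
    qed
    moreover have "norm y \<le> K" by (rule norm_blinfun_bound) (use K0 Lb yL in auto)
    ultimately show ?thesis unfolding K_def by simp
  qed
  then show ?thesis using B C by (intro exI[of _ "C * B"]) simp
qed

lemma l1_from_seq:
  fixes z :: "nat \<Rightarrow> 'b::banach"
  assumes th: "\<theta> > 0" and zb: "\<And>j. norm (z j) \<le> K"
    and low: "\<And>N b. \<theta> * (\<Sum>j<N. \<bar>b j\<bar>) \<le> norm (\<Sum>j<N. b j *\<^sub>R z j)"
  shows "l1_embeds TYPE('b)"
proof -
  have K0: "K \<ge> 0" using zb[of 0] norm_ge_zero order_trans by blast
  define T where "T a = (\<Sum>j. a j *\<^sub>R z j)" for a :: "nat \<Rightarrow> real"
  have sn: "summable (\<lambda>j. norm (a j *\<^sub>R z j))" if "summable (\<lambda>j. \<bar>a j\<bar>)" for a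
  proof (rule summable_comparison_test)
    show "\<exists>N. \<forall>n\<ge>N. norm (norm (a n *\<^sub>R z n)) \<le> K * \<bar>a n\<bar>"
      using zb by (auto intro!: mult_left_mono simp: mult.commute[of K] mult_left_mono)
    show "summable (\<lambda>n. K * \<bar>a n\<bar>)" using that by (rule summable_mult)
  qed
  have sm: "summable (\<lambda>j. a j *\<^sub>R z j)" if "summable (\<lambda>j. \<bar>a j\<bar>)" for a
    using sn[OF that] by (rule summable_norm_cancel)
  show ?thesis unfolding l1_embeds_def
  proof (rule exI[of _ T], rule exI[of _ \<theta>], rule exI[of _ K], intro conjI allI impI)
    show "\<theta> > 0" by (rule th)
  next
    fix a b :: "nat \<Rightarrow> real" assume a: "summable (\<lambda>j. \<bar>a j\<bar>)" and b: "summable (\<lambda>j. \<bar>b j\<bar>)"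
    show "T (\<lambda>j. a j + b j) = T a + T b"
      unfolding T_def using suminf_add[OF sm[OF a] sm[OF b]] by (simp add: scaleR_add_left)
  next
    fix a :: "nat \<Rightarrow> real" and r :: real assume a: "summable (\<lambda>j. \<bar>a j\<bar>)"
    show "T (\<lambda>j. r * a j) = r *\<^sub>R T a"
      unfolding T_def using suminf_scaleR_right[OF sm[OF a], of r] by simp
  next
    fix a :: "nat \<Rightarrow> real" assume a: "summable (\<lambda>j. \<bar>a j\<bar>)"
    have "(\<lambda>n. norm (\<Sum>j<n. a j *\<^sub>R z j)) \<longlonglongrightarrow> norm (T a)"
      unfolding T_def by (intro tendsto_norm) (use summable_LIMSEQ[OF sm[OF a]] in simp)
    moreover have "(\<lambda>n. \<theta> * (\<Sum>j<n. \<bar>a j\<bar>)) \<longlonglongrightarrow> \<theta> * (\<Sum>j. \<bar>a j\<bar>)"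
      by (intro tendsto_mult tendsto_const summable_LIMSEQ a)
    ultimately show "\<theta> * (\<Sum>j. \<bar>a j\<bar>) \<le> norm (T a)"
      using low by (intro LIMSEQ_le) auto
  next
    fix a :: "nat \<Rightarrow> real" assume a: "summable (\<lambda>j. \<bar>a j\<bar>)"
    have "norm (T a) \<le> (\<Sum>j. norm (a j *\<^sub>R z j))" unfolding T_def by (rule summable_norm[OF sn[OF a]])
    also have "\<dots> \<le> (\<Sum>j. K * \<bar>a j\<bar>)"
    proof (rule suminf_le)
      show "summable (\<lambda>j. norm (a j *\<^sub>R z j))" by (rule sn[OF a])
      show "summable (\<lambda>j. K * \<bar>a j\<bar>)" by (rule summable_mult[OF a])
      fix n show "norm (a n *\<^sub>R z n) \<le> K * \<bar>a n\<bar>"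
        using zb[of n] by (simp add: mult.commute[of K] mult_left_mono)
    qed
    also have "\<dots> = K * (\<Sum>j. \<bar>a j\<bar>)" by (rule suminf_mult[OF a])
    finally show "norm (T a) \<le> K * (\<Sum>j. \<bar>a j\<bar>)" by simp
  qed
qed

theorem mainTheorem6:
  fixes e :: "nat \<Rightarrow> 'a::banach" and es :: "nat \<Rightarrow> ('a \<Rightarrow>\<^sub>L real)"
  assumes "unconditional_basis e"
    and "\<forall>j. norm (e j) = 1"
    and "coordinate_functionals e es"
    and "\<forall>j. norm (es j) = 1"
    and "weak_star_schauder_basis e es"
    and "unconditional_seq es"
    and "\<not> l1_embeds TYPE('a \<Rightarrow>\<^sub>L real)"
  shows "condition_C e es"
proof (rule ccontr)
  assume nC: "\<not> condition_C e es"
  obtain K where K: "K > 0" "\<And>A xs. norm (proj e es A xs) \<le> K * norm xs"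
    using proj_bound[OF assms(1,3,6)] by blast
  define Good where "Good A xs \<theta> \<longleftrightarrow> (\<exists>(a :: nat \<Rightarrow> real) (y :: 'a \<Rightarrow>\<^sub>L real).
               summable (\<lambda>j. \<bar>a j\<bar>) \<and> (\<Sum>j. \<bar>a j\<bar>) = 1 \<and>
               (\<forall>x. (\<lambda>n. \<Sum>j<n. a j * blinfun_apply (proj e es (A j) (xs j)) x)
                      \<longlonglongrightarrow> blinfun_apply y x) \<and>
               norm y \<le> \<theta>)" for A :: "nat \<Rightarrow> nat set" and xs :: "nat \<Rightarrow> ('a \<Rightarrow>\<^sub>L real)" and \<theta> :: real
  have CC: "condition_C e es \<longleftrightarrow> (\<forall>\<Lambda>::nat set. \<forall>\<theta>::real. infinite \<Lambda> \<and> \<theta> > 0 \<longrightarrow>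
      (\<exists>A :: nat \<Rightarrow> nat set. (\<forall>j. A j \<subseteq> \<Lambda> \<and> infinite (A j)) \<and>
         (\<forall>i j. i \<noteq> j \<longrightarrow> A i \<inter> A j = {}) \<and>
         (\<forall>xs :: nat \<Rightarrow> ('a \<Rightarrow>\<^sub>L real). (\<forall>j. norm (xs j) \<le> 1) \<longrightarrow> Good A xs \<theta>)))"
    unfolding condition_C_def Good_def by (rule refl)
  from nC obtain \<Lambda> :: "nat set" and \<theta> :: real where L: "infinite \<Lambda>" "\<theta> > 0"
    and H0: "\<not> (\<exists>A :: nat \<Rightarrow> nat set.
         (\<forall>j. A j \<subseteq> \<Lambda> \<and> infinite (A j)) \<and>
         (\<forall>i j. i \<noteq> j \<longrightarrow> A i \<inter> A j = {}) \<and>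
         (\<forall>xs :: nat \<Rightarrow> ('a \<Rightarrow>\<^sub>L real). (\<forall>j. norm (xs j) \<le> 1) \<longrightarrow> Good A xs \<theta>))"
    unfolding CC by blast
  define g where "g j k = enumerate \<Lambda> (prod_encode (j, k))" for j k
  define A where "A j = range (g j)" for j
  have injE: "inj (enumerate \<Lambda>)" using strict_mono_enumerate[OF L(1)] strict_mono_imp_inj_on by blast
  have gin: "g j k = g j' k' \<Longrightarrow> j = j' \<and> k = k'" for j k j' k'
    unfolding g_def using injE by (metis inj_eq prod_encode_eq prod.inject)
  have Aprop: "\<forall>j. A j \<subseteq> \<Lambda> \<and> infinite (A j)"
  proof
    fix j
    have "A j \<subseteq> \<Lambda>" unfolding A_def g_def using enumerate_in_set[OF L(1)] by auto
    moreover have "inj (g j)" by (meson gin injI)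
    then have "infinite (A j)" unfolding A_def using finite_imageD[of "g j" UNIV] by auto
    ultimately show "A j \<subseteq> \<Lambda> \<and> infinite (A j)" by blast
  qed
  have Adisj: "\<forall>i j. i \<noteq> j \<longrightarrow> A i \<inter> A j = {}"
    unfolding A_def by (auto dest: gin)
  obtain xs where xs1: "\<forall>j. norm (xs j) \<le> (1::real)" and
    Hx: "\<And>(a :: nat \<Rightarrow> real) (y :: 'a \<Rightarrow>\<^sub>L real).
               \<not> (summable (\<lambda>j. \<bar>a j\<bar>) \<and> (\<Sum>j. \<bar>a j\<bar>) = 1 \<and>
               (\<forall>x. (\<lambda>n. \<Sum>j<n. a j * blinfun_apply (proj e es (A j) (xs j)) x)
                      \<longlonglongrightarrow> blinfun_apply y x) \<and>
               norm y \<le> \<theta>)"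
  proof -
    have "\<not> (\<forall>xs :: nat \<Rightarrow> ('a \<Rightarrow>\<^sub>L real). (\<forall>j. norm (xs j) \<le> 1) \<longrightarrow> Good A xs \<theta>)"
      using H0 Aprop Adisj by blast
    then obtain xs where "\<forall>j. norm (xs j) \<le> 1" "\<not> Good A xs \<theta>" by blast
    then show ?thesis using that unfolding Good_def by blast
  qed
  define z where "z j = proj e es (A j) (xs j)" for j
  have zb: "norm (z j) \<le> K" for j
    using K(2)[of "A j" "xs j"] xs1 K(1) unfolding z_def by (smt (verit) mult_left_le)
  have low: "\<theta> * (\<Sum>j<N. \<bar>b j\<bar>) \<le> norm (\<Sum>j<N. b j *\<^sub>R z j)" for N b
  proof (cases "(\<Sum>j<N. \<bar>b j\<bar>) = 0")
    case True then show ?thesis by simp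
  next
    case False
    define s where "s = (\<Sum>j<N. \<bar>b j\<bar>)"
    have s: "s > 0" using False unfolding s_def by (simp add: less_le sum_nonneg)
    define a where "a j = (if j < N then b j / s else 0)" for j
    define y where "y = (\<Sum>j<N. a j *\<^sub>R z j)"
    have a0: "\<And>j. j \<notin> {..<N} \<Longrightarrow> \<bar>a j\<bar> = 0" unfolding a_def by auto
    have sa: "summable (\<lambda>j. \<bar>a j\<bar>)" by (rule summable_finite[of "{..<N}"]) (use a0 in auto)
    have "(\<Sum>j. \<bar>a j\<bar>) = (\<Sum>j<N. \<bar>a j\<bar>)" by (rule suminf_finite[of "{..<N}"]) (use a0 in auto)
    also have "\<dots> = (\<Sum>j<N. \<bar>b j\<bar> / s)" unfolding a_def using s by (intro sum.cong) auto
    also have "\<dots> = 1" using s unfolding s_def[symmetric] sum_divide_distrib[symmetric] by simp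
    finally have sa1: "(\<Sum>j. \<bar>a j\<bar>) = 1" .
    have conv: "(\<lambda>n. \<Sum>j<n. a j * blinfun_apply (z j) x) \<longlonglongrightarrow> blinfun_apply y x" for x
    proof (rule tendsto_eventually, unfold eventually_sequentially, intro exI[of _ N] allI impI)
      fix n assume "N \<le> n"
      then have "(\<Sum>j<n. a j * blinfun_apply (z j) x) = (\<Sum>j<N. a j * blinfun_apply (z j) x)"
        by (intro sum.mono_neutral_right) (auto simp: a_def)
      also have "\<dots> = blinfun_apply y x" unfolding y_def by (simp add: blinfun.sum_left blinfun.scaleR_left)
      finally show "(\<Sum>j<n. a j * blinfun_apply (z j) x) = blinfun_apply y x" .
    qed
    have "\<not> norm y \<le> \<theta>" using Hx[of a y] sa sa1 conv unfolding z_def by blast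
    moreover have "y = (1 / s) *\<^sub>R (\<Sum>j<N. b j *\<^sub>R z j)"
      unfolding y_def a_def by (simp add: scaleR_sum_right)
    ultimately have "\<theta> < norm (\<Sum>j<N. b j *\<^sub>R z j) / s" using s by simp
    then show ?thesis using s unfolding s_def[symmetric] by (simp add: field_simps)
  qed
  have "l1_embeds TYPE('a \<Rightarrow>\<^sub>L real)" by (rule l1_from_seq[OF L(2) zb low])
  with assms(7) show False by contradiction
qed

end
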